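(* Let $\overline M$ be a continuous martingale on $[0,T]$ with $\overline M_0=0$ and let $k>0$ satisfy $$\sup_\tau\Bigl\|\mathbb E\Bigl[\exp\bigl(k(\langle\overline M,\overline M\rangle_T-\langle\overline M,\overline M\rangle_\tau)\bigr)\,\Big|\,\mathcal F_\tau\Bigr]\Bigr\|_{L^\infty}<+\infty,$$ where the supremum is over all stopping times $\tau$ with values in $[0,T]$. Then there exists $\tilde k>k$ such that the same supremum with $k$ replaced by $\tilde k$ is finite. In particular $b(\overline M)>k$.
   Context: The filtered probability space $(\Omega,\mathcal F,(\mathcal F_t)_{t\in[0,T]},\mathbb P)$ satisfies the usual conditions. For a continuous martingale $\overline M$ with $\overline M_0=0$, the critical exponent is $$b(\overline M):=\sup\Bigl\{b\ge0\,\Big|\,\sup_\tau\bigl\|\mathbb E[\exp(b(\langle\overline M,\overline M\rangle_T-\langle\overline M,\overline M\rangle_\tau))\,|\,\mathcal F_\tau]\bigr\|_{L^\infty}<+\infty\Bigr\},$$ where the inner supremum is over stopping times $\tau$ valued in $[0,T]$. *)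

theory Defs
  imports "HOL-Probability.Probability"
begin

text \<open>Time is real; the filtration
  is a family of measures F t indexed by all reals (only t in [0,T] matters,
  stopping times are required to take values in [0,T]).\<close>

definition usual_filtration :: "'a measure \<Rightarrow> (real \<Rightarrow> 'a measure) \<Rightarrow> real \<Rightarrow> bool" where
  "usual_filtration M F T \<longleftrightarrow>
     prob_space M \<and> filtration (space M) F \<and>
     (\<forall>t. sets (F t) \<subseteq> sets M) \<and>
     (\<forall>N \<in> null_sets M. \<forall>S. S \<subseteq> N \<longrightarrow> S \<in> sets (F 0)) \<and>
     (\<forall>t \<in> {0..<T}. sets (F t) = (\<Inter>s \<in> {t<..}. sets (F s)))"

definition stopping_time_on :: "'a measure \<Rightarrow> (real \<Rightarrow> 'a measure) \<Rightarrow> real \<Rightarrow> ('a \<Rightarrow> real) \<Rightarrow> bool" where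
  "stopping_time_on M F T \<tau> \<longleftrightarrow> stopping_time F \<tau> \<and> (\<forall>\<omega> \<in> space M. \<tau> \<omega> \<in> {0..T})"

definition martingale_on :: "'a measure \<Rightarrow> (real \<Rightarrow> 'a measure) \<Rightarrow> real \<Rightarrow> (real \<Rightarrow> 'a \<Rightarrow> real) \<Rightarrow> bool" where
  "martingale_on M F T X \<longleftrightarrow>
     (\<forall>t \<in> {0..T}. X t \<in> borel_measurable (F t) \<and> integrable M (X t)) \<and>
     (\<forall>s t. 0 \<le> s \<longrightarrow> s \<le> t \<longrightarrow> t \<le> T \<longrightarrow>
        (AE \<omega> in M. real_cond_exp M (F s) (X t) \<omega> = X s \<omega>))"

definition continuous_martingale_on :: "'a measure \<Rightarrow> (real \<Rightarrow> 'a measure) \<Rightarrow> real \<Rightarrow> (real \<Rightarrow> 'a \<Rightarrow> real) \<Rightarrow> bool" where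
  "continuous_martingale_on M F T X \<longleftrightarrow>
     martingale_on M F T X \<and> (\<forall>\<omega> \<in> space M. continuous_on {0..T} (\<lambda>t. X t \<omega>))"

definition local_martingale_on :: "'a measure \<Rightarrow> (real \<Rightarrow> 'a measure) \<Rightarrow> real \<Rightarrow> (real \<Rightarrow> 'a \<Rightarrow> real) \<Rightarrow> bool" where
  "local_martingale_on M F T X \<longleftrightarrow>
     (\<exists>\<sigma> :: nat \<Rightarrow> 'a \<Rightarrow> real.
        (\<forall>n. stopping_time_on M F T (\<sigma> n)) \<and>
        (\<forall>n. \<forall>\<omega> \<in> space M. \<sigma> n \<omega> \<le> \<sigma> (Suc n) \<omega>) \<and>
        (AE \<omega> in M. \<exists>n. \<sigma> n \<omega> = T) \<and>
        (\<forall>n. martingale_on M F T (\<lambda>t \<omega>. X (min t (\<sigma> n \<omega>)) \<omega>)))"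

definition is_quadratic_variation :: "'a measure \<Rightarrow> (real \<Rightarrow> 'a measure) \<Rightarrow> real \<Rightarrow> (real \<Rightarrow> 'a \<Rightarrow> real) \<Rightarrow> (real \<Rightarrow> 'a \<Rightarrow> real) \<Rightarrow> bool" where
  "is_quadratic_variation M F T X A \<longleftrightarrow>
     (\<forall>t \<in> {0..T}. A t \<in> borel_measurable (F t)) \<and>
     (\<forall>\<omega> \<in> space M. continuous_on {0..T} (\<lambda>t. A t \<omega>) \<and> mono_on {0..T} (\<lambda>t. A t \<omega>) \<and> A 0 \<omega> = 0) \<and>
     local_martingale_on M F T (\<lambda>t \<omega>. (X t \<omega>)\<^sup>2 - A t \<omega>)"

text \<open>The conditional expectation
  of the nonnegative variable is taken in ennreal (so no integrability is presupposed);
  F_tau is the stopping-time sigma-algebra pre_sigma.\<close>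
definition exp_qv_bounded :: "'a measure \<Rightarrow> (real \<Rightarrow> 'a measure) \<Rightarrow> real \<Rightarrow> (real \<Rightarrow> 'a \<Rightarrow> real) \<Rightarrow> real \<Rightarrow> bool" where
  "exp_qv_bounded M F T A b \<longleftrightarrow>
     (\<exists>C :: real. \<forall>\<tau>. stopping_time_on M F T \<tau> \<longrightarrow>
        (AE \<omega> in M. nn_cond_exp M (filtration.pre_sigma (space M) F \<tau>)
              (\<lambda>\<omega>. ennreal (exp (b * (A T \<omega> - A (\<tau> \<omega>) \<omega>)))) \<omega> \<le> ennreal C))"

definition critical_exponent :: "'a measure \<Rightarrow> (real \<Rightarrow> 'a measure) \<Rightarrow> real \<Rightarrow> (real \<Rightarrow> 'a \<Rightarrow> real) \<Rightarrow> ereal" where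
  "critical_exponent M F T A = Sup (ereal ` {b. b \<ge> 0 \<and> exp_qv_bounded M F T A b})"

end

theory Submission
  imports Defs
begin


lemma measurable_comp_time:
  fixes A :: "real \<Rightarrow> 'a \<Rightarrow> real" and F :: "real \<Rightarrow> 'a measure"
  assumes FI: "filtration \<Omega> F"
    and Ameas: "\<forall>s\<in>{0..T}. A s \<in> borel_measurable (F s)"
    and Acont: "\<forall>\<omega>\<in>\<Omega>. continuous_on {0..T} (\<lambda>s. A s \<omega>)"
    and t: "0 \<le> t" "t \<le> T"
    and sig: "\<sigma> \<in> borel_measurable (F t)" "\<forall>\<omega>\<in>\<Omega>. \<sigma> \<omega> \<in> {0..t}"
  shows "(\<lambda>\<omega>. A (\<sigma> \<omega>) \<omega>) \<in> borel_measurable (F t)"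
proof -
  interpret filtration \<Omega> F by fact
  have spF: "space (F s) = \<Omega>" for s by (rule space_F)
  have sub: "A s \<in> borel_measurable (F t)" if "0 \<le> s" "s \<le> t" for s
  proof -
    have "subalgebra (F t) (F s)" unfolding subalgebra_def using sets_F_mono[OF that(2)] spF by auto
    then show ?thesis by (rule measurable_from_subalg) (use Ameas that t in auto)
  qed
  define g where "g n \<omega> = real_of_int \<lfloor>\<sigma> \<omega> * real (Suc n)\<rfloor> / real (Suc n)" for n \<omega>
  have g_rng: "g n \<omega> \<in> {0..t}" "\<bar>g n \<omega> - \<sigma> \<omega>\<bar> \<le> 1 / real (Suc n)" if "\<omega> \<in> \<Omega>" for n \<omega>
  proof -
    have s: "0 \<le> \<sigma> \<omega>" "\<sigma> \<omega> \<le> t" using sig that by auto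
    have a: "0 \<le> \<lfloor>\<sigma> \<omega> * real (Suc n)\<rfloor>" using s by simp
    have b: "real_of_int \<lfloor>\<sigma> \<omega> * real (Suc n)\<rfloor> \<le> \<sigma> \<omega> * real (Suc n)" by simp
    have c: "\<sigma> \<omega> * real (Suc n) < real_of_int \<lfloor>\<sigma> \<omega> * real (Suc n)\<rfloor> + 1" by linarith
    have N: "0 < real (Suc n)" by simp
    have d1: "g n \<omega> \<le> \<sigma> \<omega>" unfolding g_def using b N by (simp add: pos_divide_le_eq)
    have d2: "\<sigma> \<omega> - 1 / real (Suc n) \<le> g n \<omega>" unfolding g_def using c N
      by (simp add: diff_le_eq pos_le_divide_eq algebra_simps add_divide_distrib[symmetric])
    have d0: "0 \<le> g n \<omega>" unfolding g_def using a by simp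
    show "g n \<omega> \<in> {0..t}" using d0 d1 s by simp
    show "\<bar>g n \<omega> - \<sigma> \<omega>\<bar> \<le> 1 / real (Suc n)" using d1 d2 by simp
  qed
  have gmeas: "(\<lambda>\<omega>. A (g n \<omega>) \<omega>) \<in> borel_measurable (F t)" for n
  proof -
    define N where "N = real (Suc n)"
    define m where "m = \<lfloor>t * N\<rfloor>"
    have N0: "N > 0" unfolding N_def by simp
    have eq: "A (g n \<omega>) \<omega> = (\<Sum>j\<in>{0..m}. if \<lfloor>\<sigma> \<omega> * N\<rfloor> = j then A (real_of_int j / N) \<omega> else 0)"
      if "\<omega> \<in> \<Omega>" for \<omega>
    proof -
      have s: "0 \<le> \<sigma> \<omega>" "\<sigma> \<omega> \<le> t" using sig that by auto
      have "\<lfloor>\<sigma> \<omega> * N\<rfloor> \<in> {0..m}" unfolding m_def using s N0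
        by (auto intro!: floor_mono mult_right_mono)
      then show ?thesis unfolding g_def N_def[symmetric] by simp
    qed
    have jm: "(\<lambda>\<omega>. if \<lfloor>\<sigma> \<omega> * N\<rfloor> = j then A (real_of_int j / N) \<omega> else 0) \<in> borel_measurable (F t)"
      if "j \<in> {0..m}" for j
    proof -
      have j: "0 \<le> real_of_int j / N" "real_of_int j / N \<le> t" using that N0 unfolding m_def
        by (auto simp: divide_simps) (meson le_floor_iff mult.commute)
      have [measurable]: "A (real_of_int j / N) \<in> borel_measurable (F t)" using sub j by auto
      show ?thesis using sig(1) by measurable
    qed
    have "(\<lambda>\<omega>. \<Sum>j\<in>{0..m}. if \<lfloor>\<sigma> \<omega> * N\<rfloor> = j then A (real_of_int j / N) \<omega> else 0) \<in> borel_measurable (F t)"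
      using jm by (intro borel_measurable_sum) auto
    then show ?thesis by (rule measurable_cong[THEN iffD1, rotated]) (simp add: eq spF)
  qed
  show ?thesis
  proof (rule borel_measurable_LIMSEQ_real[OF _ gmeas])
    fix \<omega> assume "\<omega> \<in> space (F t)"
    then have w: "\<omega> \<in> \<Omega>" by (simp add: spF)
    have "(\<lambda>n. g n \<omega>) \<longlonglongrightarrow> \<sigma> \<omega>"
    proof (rule LIMSEQ_I)
      fix r :: real assume "0 < r"
      then obtain n0 where n0: "1 / real (Suc n0) < r" using nat_approx_posE by blast
      show "\<exists>no. \<forall>n\<ge>no. norm (g n \<omega> - \<sigma> \<omega>) < r"
      proof (intro exI allI impI)
        fix n assume "n0 \<le> n"
        then have "1 / real (Suc n) \<le> 1 / real (Suc n0)" by (simp add: frac_le)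
        then show "norm (g n \<omega> - \<sigma> \<omega>) < r" using g_rng(2)[OF w, of n] n0 by simp
      qed
    qed
    moreover have "\<sigma> \<omega> \<in> {0..T}" using sig(2) w t by auto
    moreover have "\<forall>\<^sub>F n in sequentially. g n \<omega> \<in> {0..T}"
      using g_rng(1)[OF w] t by (intro always_eventually allI) (auto intro: order_trans)
    ultimately show "(\<lambda>n. A (g n \<omega>) \<omega>) \<longlonglongrightarrow> A (\<sigma> \<omega>) \<omega>"
      using continuous_on_tendsto_compose[of "{0..T}" "\<lambda>s. A s \<omega>"] Acont w by auto
  qed
qed


lemma stopping_time_meas_le:
  assumes FI: "filtration \<Omega> F" and st: "stopping_time F \<sigma>" and le: "\<forall>\<omega>\<in>\<Omega>. \<sigma> \<omega> \<le> t"
  shows "\<sigma> \<in> borel_measurable (F t)"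
proof (rule borel_measurableI_le)
  interpret filtration \<Omega> F by fact
  fix s
  show "{\<omega> \<in> space (F t). \<sigma> \<omega> \<le> s} \<in> sets (F t)"
  proof (cases "t \<le> s")
    case True
    then have "{\<omega> \<in> space (F t). \<sigma> \<omega> \<le> s} = space (F t)" using le space_F by force
    then show ?thesis by simp
  next
    case False
    have "{\<omega> \<in> space (F s). \<sigma> \<omega> \<le> s} \<in> sets (F s)" using stopping_timeD[OF st, of s]
      by (simp add: Measurable.pred_def)
    have st: "s \<le> t" using False le_cases by blast
    from \<open>{\<omega> \<in> space (F s). \<sigma> \<omega> \<le> s} \<in> sets (F s)\<close> have "{\<omega> \<in> space (F s). \<sigma> \<omega> \<le> s} \<in> sets (F t)"
      using sets_F_mono[OF st] by blast
    then show ?thesis by (simp add: space_F)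
  qed
qed

context
  fixes M :: "'a measure" and F :: "real \<Rightarrow> 'a measure" and T :: real and A :: "real \<Rightarrow> 'a \<Rightarrow> real"
  assumes FI: "filtration (space M) F"
    and subM: "\<forall>t. sets (F t) \<subseteq> sets M"
    and Ameas: "\<forall>t\<in>{0..T}. A t \<in> borel_measurable (F t)"
    and Acont: "\<forall>\<omega>\<in>space M. continuous_on {0..T} (\<lambda>t. A t \<omega>)"
    and Amono: "\<forall>\<omega>\<in>space M. mono_on {0..T} (\<lambda>t. A t \<omega>)"
    and T0: "0 \<le> T"
begin

lemma spF: "space (F t) = space M"
  using FI by (simp add: filtration.space_F)

lemma A_min_meas:
  assumes st: "stopping_time_on M F T \<tau>" and t: "0 \<le> t" "t \<le> T"
  shows "(\<lambda>\<omega>. A (min (\<tau> \<omega>) t) \<omega>) \<in> borel_measurable (F t)"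
proof (rule measurable_comp_time[OF FI Ameas Acont t])
  have "stopping_time F (\<lambda>\<omega>. min (\<tau> \<omega>) t)"
    using st unfolding stopping_time_on_def by (intro stopping_time_min stopping_time_const) auto
  then show "(\<lambda>\<omega>. min (\<tau> \<omega>) t) \<in> borel_measurable (F t)"
    by (rule stopping_time_meas_le[OF FI]) auto
  show "\<forall>\<omega>\<in>space M. min (\<tau> \<omega>) t \<in> {0..t}" using st t unfolding stopping_time_on_def by auto
qed

lemma A_stop_meas:
  assumes st: "stopping_time_on M F T \<tau>"
  shows "(\<lambda>\<omega>. A (\<tau> \<omega>) \<omega>) \<in> borel_measurable (F T)"
proof -
  have "(\<lambda>\<omega>. A (min (\<tau> \<omega>) T) \<omega>) \<in> borel_measurable (F T)" using A_min_meas[OF st T0] by simp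
  moreover have "\<omega> \<in> space (F T) \<Longrightarrow> A (min (\<tau> \<omega>) T) \<omega> = A (\<tau> \<omega>) \<omega>" for \<omega>
    using st spF unfolding stopping_time_on_def by (auto simp: min_def)
  ultimately show ?thesis using measurable_cong by (smt (verit))
qed

lemma U_meas:
  assumes st: "stopping_time_on M F T \<tau>"
  shows "(\<lambda>\<omega>. A T \<omega> - A (\<tau> \<omega>) \<omega>) \<in> borel_measurable (F T)"
proof -
  have "A T \<in> borel_measurable (F T)" using Ameas T0 by auto
  then show ?thesis using A_stop_meas[OF st] by (intro borel_measurable_diff)
qed

definition hit :: "('a \<Rightarrow> real) \<Rightarrow> real \<Rightarrow> 'a \<Rightarrow> real" where
  "hit \<tau> x \<omega> = (if x \<le> A T \<omega> - A (\<tau> \<omega>) \<omega> then Inf {s \<in> {\<tau> \<omega>..T}. x \<le> A s \<omega> - A (\<tau> \<omega>) \<omega>} else T)"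

lemma hit_props:
  assumes w: "\<omega> \<in> space M" and a: "\<tau> \<omega> \<in> {0..T}" and x: "0 \<le> x"
  shows "hit \<tau> x \<omega> \<in> {\<tau> \<omega>..T}"
    and "x \<le> A T \<omega> - A (\<tau> \<omega>) \<omega> \<Longrightarrow> A (hit \<tau> x \<omega>) \<omega> - A (\<tau> \<omega>) \<omega> = x"
    and "hit \<tau> x \<omega> \<le> t \<longleftrightarrow> (T \<le> t \<or> (\<tau> \<omega> \<le> t \<and> x \<le> A t \<omega> - A (\<tau> \<omega>) \<omega>))"
proof -
  define a' where "a' = \<tau> \<omega>"
  define f where "f s = A s \<omega> - A a' \<omega>" for s
  define S where "S = {s \<in> {a'..T}. x \<le> f s}"
  have a': "0 \<le> a'" "a' \<le> T" using a a'_def by auto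
  have "continuous_on {0..T} (\<lambda>s. A s \<omega>)" using Acont w by auto
  then have "continuous_on {a'..T} (\<lambda>s. A s \<omega>)" by (rule continuous_on_subset) (use a' in auto)
  then have contf: "continuous_on {a'..T} f" unfolding f_def by (intro continuous_intros)
  have monof: "f s \<le> f s'" if "s \<in> {0..T}" "s' \<in> {0..T}" "s \<le> s'" for s s'
    using Amono w that unfolding f_def by (auto simp: mono_on_def)
  have hit_eq: "hit \<tau> x \<omega> = (if x \<le> f T then Inf S else T)"
    unfolding hit_def S_def f_def a'_def by simp
  have S_props: "Inf S \<in> S" "\<And>s. s \<in> S \<Longrightarrow> Inf S \<le> s" if "x \<le> f T"
  proof -
    have "closed S" unfolding S_def
      by (rule continuous_on_closed_Collect_le[OF continuous_on_const contf]) simp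
    moreover have "T \<in> S" using that a' unfolding S_def by auto
    moreover have "bdd_below S" unfolding S_def by (rule bdd_belowI[of _ a']) auto
    ultimately show "Inf S \<in> S" "\<And>s. s \<in> S \<Longrightarrow> Inf S \<le> s"
      using closed_contains_Inf cInf_lower by blast+
  qed
  show r1: "hit \<tau> x \<omega> \<in> {\<tau> \<omega>..T}"
    using S_props a' unfolding hit_eq a'_def[symmetric] S_def by auto
  show "A (hit \<tau> x \<omega>) \<omega> - A (\<tau> \<omega>) \<omega> = x" if xT: "x \<le> A T \<omega> - A (\<tau> \<omega>) \<omega>"
  proof -
    have xT': "x \<le> f T" using xT unfolding f_def a'_def .
    let ?r = "Inf S"
    have r: "?r \<in> S" using S_props[OF xT'] by auto
    have "f a' \<le> x" unfolding f_def using x by simp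
    moreover have "x \<le> f ?r" using r unfolding S_def by auto
    moreover have "a' \<le> ?r" "?r \<le> T" using r unfolding S_def by auto
    moreover have "continuous_on {a'..?r} f" using contf \<open>?r \<le> T\<close> by (auto elim: continuous_on_subset)
    ultimately obtain s where s: "a' \<le> s" "s \<le> ?r" "f s = x" using IVT'[of f a' x ?r] by blast
    have sT: "s \<le> T" using s(2) \<open>?r \<le> T\<close> by linarith
    have "s \<in> S" unfolding S_def using s sT by auto
    then have "?r \<le> s" using S_props[OF xT'] by auto
    then have "s = ?r" using s by auto
    then show ?thesis using s hit_eq xT' unfolding f_def a'_def by simp
  qed
  show "hit \<tau> x \<omega> \<le> t \<longleftrightarrow> (T \<le> t \<or> (\<tau> \<omega> \<le> t \<and> x \<le> A t \<omega> - A (\<tau> \<omega>) \<omega>))"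
  proof
    assume h: "hit \<tau> x \<omega> \<le> t"
    show "T \<le> t \<or> (\<tau> \<omega> \<le> t \<and> x \<le> A t \<omega> - A (\<tau> \<omega>) \<omega>)"
    proof (cases "T \<le> t")
      case False
      then have xT': "x \<le> f T" using h hit_eq by (auto split: if_splits)
      then have "Inf S \<in> S" using S_props by auto
      moreover have "Inf S \<le> t" using h hit_eq xT' by simp
      ultimately have "a' \<le> t" "x \<le> f t" using monof[of "Inf S" t] False a' unfolding S_def by auto
      then show ?thesis unfolding f_def a'_def by auto
    qed simp
  next
    assume h: "T \<le> t \<or> (\<tau> \<omega> \<le> t \<and> x \<le> A t \<omega> - A (\<tau> \<omega>) \<omega>)"
    show "hit \<tau> x \<omega> \<le> t"
    proof (cases "T \<le> t")
      case True then show ?thesis using r1 by auto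
    next
      case False
      then have t: "a' \<le> t" "x \<le> f t" "t \<le> T" using h unfolding f_def a'_def by auto
      then have "x \<le> f T" using monof[of t T] a' by auto
      moreover have "t \<in> S" using t unfolding S_def by auto
      ultimately show ?thesis using S_props hit_eq by auto
    qed
  qed
qed


lemma hit_stopping:
  assumes st: "stopping_time_on M F T \<tau>" and x: "0 \<le> x"
  shows "stopping_time_on M F T (hit \<tau> x)"
proof -
  have rng: "\<tau> \<omega> \<in> {0..T}" if "\<omega> \<in> space M" for \<omega> using st that unfolding stopping_time_on_def by auto
  have stt: "stopping_time F \<tau>" using st unfolding stopping_time_on_def by auto
  have "stopping_time F (hit \<tau> x)"
  proof (rule stopping_timeI)
    fix t
    show "Measurable.pred (F t) (\<lambda>\<omega>. hit \<tau> x \<omega> \<le> t)"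
    proof (cases "T \<le> t")
      case True
      then have "{\<omega> \<in> space (F t). hit \<tau> x \<omega> \<le> t} = space (F t)"
        using hit_props(3)[of _ \<tau> x] rng x spF by auto
      then show ?thesis unfolding Measurable.pred_def by simp
    next
      case False
      show ?thesis
      proof (cases "t < 0")
        case True
        then have "{\<omega> \<in> space (F t). hit \<tau> x \<omega> \<le> t} = {}"
          using hit_props(1)[of _ \<tau> x] x spF rng by fastforce
        then show ?thesis unfolding Measurable.pred_def by (metis sets.empty_sets)
      next
        case t0: False
        have t: "0 \<le> t" "t \<le> T" using False t0 by auto
        have [measurable]: "A t \<in> borel_measurable (F t)" using Ameas t by auto
        have [measurable]: "(\<lambda>\<omega>. A (min (\<tau> \<omega>) t) \<omega>) \<in> borel_measurable (F t)"
          by (rule A_min_meas[OF st t])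
        have [measurable]: "Measurable.pred (F t) (\<lambda>\<omega>. \<tau> \<omega> \<le> t)" by (rule stopping_timeD[OF stt])
        have P: "Measurable.pred (F t) (\<lambda>\<omega>. \<tau> \<omega> \<le> t \<and> x \<le> A t \<omega> - A (min (\<tau> \<omega>) t) \<omega>)"
          by measurable
        have "hit \<tau> x \<omega> \<le> t \<longleftrightarrow> (\<tau> \<omega> \<le> t \<and> x \<le> A t \<omega> - A (min (\<tau> \<omega>) t) \<omega>)"
          if "\<omega> \<in> space (F t)" for \<omega>
          using hit_props(3)[of \<omega> \<tau> x t] rng[of \<omega>] x that spF False by (auto simp: min_def)
        then show ?thesis using P by (simp cong: measurable_cong)
      qed
    qed
  qed
  moreover have "hit \<tau> x \<omega> \<in> {0..T}" if "\<omega> \<in> space M" for \<omega>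
    using hit_props(1)[of \<omega> \<tau> x] that rng[OF that] x by auto
  ultimately show ?thesis unfolding stopping_time_on_def by auto
qed

lemma hit_U:
  assumes st: "stopping_time_on M F T \<tau>" and x: "0 \<le> x" and w: "\<omega> \<in> space M"
    and xU: "x \<le> A T \<omega> - A (\<tau> \<omega>) \<omega>"
  shows "A T \<omega> - A (hit \<tau> x \<omega>) \<omega> = (A T \<omega> - A (\<tau> \<omega>) \<omega>) - x"
proof -
  have "\<tau> \<omega> \<in> {0..T}" using st w unfolding stopping_time_on_def by auto
  with hit_props(2)[of \<omega> \<tau> x] w x xU show ?thesis by simp
qed

lemma hit_pre_sigma:
  assumes st: "stopping_time_on M F T \<tau>" and x: "0 \<le> x"
    and B: "B \<in> sets (filtration.pre_sigma (space M) F \<tau>)"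
  shows "{\<omega>\<in>B. x \<le> A T \<omega> - A (\<tau> \<omega>) \<omega>} \<in> sets (filtration.pre_sigma (space M) F (hit \<tau> x))"
proof -
  have rng: "\<tau> \<omega> \<in> {0..T}" if "\<omega> \<in> space M" for \<omega> using st that unfolding stopping_time_on_def by auto
  have stt: "stopping_time F \<tau>" using st unfolding stopping_time_on_def by auto
  have sth: "stopping_time F (hit \<tau> x)" using hit_stopping[OF st x] unfolding stopping_time_on_def by auto
  have Bsp: "B \<subseteq> space M" using sets.sets_into_space[OF B] filtration.space_pre_sigma[OF FI] by simp
  have BF: "{\<omega>\<in>B. \<tau> \<omega> \<le> t} \<in> sets (F t)" for t
    by (rule filtration.sets_pre_sigmaD[OF FI stt B])
  show ?thesis
  proof (rule filtration.sets_pre_sigmaI[OF FI sth])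
    fix t
    show "{\<omega> \<in> {\<omega> \<in> B. x \<le> A T \<omega> - A (\<tau> \<omega>) \<omega>}. hit \<tau> x \<omega> \<le> t} \<in> sets (F t)"
    proof (cases "T \<le> t")
      case True
      have "{\<omega>\<in>B. \<tau> \<omega> \<le> T} = B" using Bsp rng by auto
      then have B1: "B \<in> sets (F T)" using BF[of T] by simp
      have "Measurable.pred (F T) (\<lambda>\<omega>. x \<le> A T \<omega> - A (\<tau> \<omega>) \<omega>)"
        using U_meas[OF st] by measurable
      then have "B \<inter> {\<omega>\<in>space (F T). x \<le> A T \<omega> - A (\<tau> \<omega>) \<omega>} \<in> sets (F T)"
        using B1 unfolding Measurable.pred_def by auto
      moreover have "B \<inter> {\<omega>\<in>space (F T). x \<le> A T \<omega> - A (\<tau> \<omega>) \<omega>}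
          = {\<omega> \<in> {\<omega> \<in> B. x \<le> A T \<omega> - A (\<tau> \<omega>) \<omega>}. hit \<tau> x \<omega> \<le> t}"
        using hit_props(3)[of _ \<tau> x] rng x Bsp spF True by auto
      ultimately show ?thesis using filtration.sets_F_mono[OF FI True] by auto
    next
      case False
      show ?thesis
      proof (cases "t < 0")
        case True
        then have "{\<omega> \<in> {\<omega> \<in> B. x \<le> A T \<omega> - A (\<tau> \<omega>) \<omega>}. hit \<tau> x \<omega> \<le> t} = {}"
          using hit_props(1)[of _ \<tau> x] x Bsp rng by fastforce
        then show ?thesis by (metis sets.empty_sets)
      next
        case t0: False
        have t: "0 \<le> t" "t \<le> T" using False t0 by auto
        have [measurable]: "A t \<in> borel_measurable (F t)" using Ameas t by auto
        have [measurable]: "(\<lambda>\<omega>. A (min (\<tau> \<omega>) t) \<omega>) \<in> borel_measurable (F t)"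
          by (rule A_min_meas[OF st t])
        have "Measurable.pred (F t) (\<lambda>\<omega>. x \<le> A t \<omega> - A (min (\<tau> \<omega>) t) \<omega>)" by measurable
        then have "{\<omega>\<in>B. \<tau> \<omega> \<le> t} \<inter> {\<omega>\<in>space (F t). x \<le> A t \<omega> - A (min (\<tau> \<omega>) t) \<omega>} \<in> sets (F t)"
          using BF[of t] unfolding Measurable.pred_def by auto
        moreover have "{\<omega>\<in>B. \<tau> \<omega> \<le> t} \<inter> {\<omega>\<in>space (F t). x \<le> A t \<omega> - A (min (\<tau> \<omega>) t) \<omega>}
          = {\<omega> \<in> {\<omega> \<in> B. x \<le> A T \<omega> - A (\<tau> \<omega>) \<omega>}. hit \<tau> x \<omega> \<le> t}"
        proof (intro equalityI subsetI)
          fix \<omega> assume "\<omega> \<in> {\<omega>\<in>B. \<tau> \<omega> \<le> t} \<inter> {\<omega>\<in>space (F t). x \<le> A t \<omega> - A (min (\<tau> \<omega>) t) \<omega>}"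
          then have w: "\<omega> \<in> B" "\<omega> \<in> space M" "\<tau> \<omega> \<le> t" "x \<le> A t \<omega> - A (\<tau> \<omega>) \<omega>" using Bsp by (auto simp: min_def)
          have "A t \<omega> \<le> A T \<omega>" using Amono w(2) t by (auto simp: mono_on_def)
          then show "\<omega> \<in> {\<omega> \<in> {\<omega> \<in> B. x \<le> A T \<omega> - A (\<tau> \<omega>) \<omega>}. hit \<tau> x \<omega> \<le> t}"
            using w hit_props(3)[of \<omega> \<tau> x t] rng[OF w(2)] x by auto
        next
          fix \<omega> assume "\<omega> \<in> {\<omega> \<in> {\<omega> \<in> B. x \<le> A T \<omega> - A (\<tau> \<omega>) \<omega>}. hit \<tau> x \<omega> \<le> t}"
          then show "\<omega> \<in> {\<omega>\<in>B. \<tau> \<omega> \<le> t} \<inter> {\<omega>\<in>space (F t). x \<le> A t \<omega> - A (min (\<tau> \<omega>) t) \<omega>}"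
            using hit_props(3)[of \<omega> \<tau> x t] rng[of \<omega>] x Bsp spF False by (auto simp: min_def)
        qed
        ultimately show ?thesis by simp
      qed
    qed
  qed
qed


lemma pre_sigma_subalg:
  assumes st: "stopping_time_on M F T \<tau>"
  shows "subalgebra M (filtration.pre_sigma (space M) F \<tau>)"
proof -
  have stt: "stopping_time F \<tau>" using st unfolding stopping_time_on_def by auto
  have "S \<in> sets M" if S: "S \<in> sets (filtration.pre_sigma (space M) F \<tau>)" for S
  proof -
    have Ssp: "S \<subseteq> space M" using sets.sets_into_space[OF S] filtration.space_pre_sigma[OF FI] by simp
    have "{\<omega>\<in>S. \<tau> \<omega> \<le> T} \<in> sets (F T)" by (rule filtration.sets_pre_sigmaD[OF FI stt S])
    moreover have "{\<omega>\<in>S. \<tau> \<omega> \<le> T} = S" using Ssp st unfolding stopping_time_on_def by auto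
    ultimately show ?thesis using subM by auto
  qed
  then show ?thesis unfolding subalgebra_def using filtration.space_pre_sigma[OF FI] by auto
qed

lemma U_measM:
  assumes st: "stopping_time_on M F T \<tau>"
  shows "(\<lambda>\<omega>. A T \<omega> - A (\<tau> \<omega>) \<omega>) \<in> borel_measurable M"
proof -
  have "subalgebra M (F T)" unfolding subalgebra_def using spF subM by auto
  then show ?thesis by (rule measurable_from_subalg) (rule U_meas[OF st])
qed

end




lemma CE1:
  assumes fm: "finite_measure M" and sa: "subalgebra M G" and f: "f \<in> borel_measurable M"
    and ae: "AE \<omega> in M. nn_cond_exp M G f \<omega> \<le> c" and B: "B \<in> sets G"
  shows "(\<integral>\<^sup>+\<omega>. indicator B \<omega> * f \<omega> \<partial>M) \<le> c * emeasure M B"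
proof -
  interpret finite_measure_subalgebra M G using fm sa by (simp add: finite_measure_subalgebra_def finite_measure_subalgebra_axioms_def)
  have BM: "B \<in> sets M" using sa B unfolding subalgebra_def by auto
  have "(\<integral>\<^sup>+\<omega>. indicator B \<omega> * f \<omega> \<partial>M) = (\<integral>\<^sup>+\<omega>. indicator B \<omega> * nn_cond_exp M G f \<omega> \<partial>M)"
    by (rule nn_cond_exp_intg[symmetric]) (use B f in auto)
  also have "\<dots> \<le> (\<integral>\<^sup>+\<omega>. c * indicator B \<omega> \<partial>M)"
    by (rule nn_integral_mono_AE) (use ae in \<open>auto split: split_indicator\<close>)
  also have "\<dots> = c * emeasure M B" using BM by (simp add: nn_integral_cmult)
  finally show ?thesis .
qed

lemma CE2:
  assumes fm: "finite_measure M" and sa: "subalgebra M G" and f: "f \<in> borel_measurable M"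
    and c: "0 \<le> c"
    and bd: "\<And>B. B \<in> sets G \<Longrightarrow> (\<integral>\<^sup>+\<omega>. indicator B \<omega> * f \<omega> \<partial>M) \<le> ennreal c * emeasure M B"
  shows "AE \<omega> in M. nn_cond_exp M G f \<omega> \<le> ennreal c"
proof -
  interpret finite_measure_subalgebra M G using fm sa by (simp add: finite_measure_subalgebra_def finite_measure_subalgebra_axioms_def)
  define g where "g = nn_cond_exp M G f"
  have gG[measurable]: "g \<in> borel_measurable G" unfolding g_def by simp
  have spG: "space G = space M" using sa unfolding subalgebra_def by auto
  define S where "S n = {\<omega>\<in>space M. ennreal (c + 1 / Suc n) \<le> g \<omega>}" for n :: nat
  have SG: "S n \<in> sets G" for n
  proof -
    have "{\<omega>\<in>space G. ennreal (c + 1 / Suc n) \<le> g \<omega>} \<in> sets G" by measurable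
    then show ?thesis unfolding S_def spG .
  qed
  have SM: "S n \<in> sets M" for n using SG[of n] sa unfolding subalgebra_def by auto
  have null: "S n \<in> null_sets M" for n
  proof -
    define e where "e = 1 / real (Suc n)"
    have e: "0 < e" unfolding e_def by simp
    have "ennreal (c + e) * emeasure M (S n) = (\<integral>\<^sup>+\<omega>. ennreal (c + e) * indicator (S n) \<omega> \<partial>M)"
      using SM by (simp add: nn_integral_cmult)
    also have "\<dots> \<le> (\<integral>\<^sup>+\<omega>. indicator (S n) \<omega> * g \<omega> \<partial>M)"
      by (rule nn_integral_mono) (auto simp: S_def e_def split: split_indicator)
    also have "\<dots> = (\<integral>\<^sup>+\<omega>. indicator (S n) \<omega> * f \<omega> \<partial>M)"
      unfolding g_def by (rule nn_cond_exp_intg) (use SG f in auto)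
    also have "\<dots> \<le> ennreal c * emeasure M (S n)" by (rule bd[OF SG])
    finally have le: "ennreal (c + e) * emeasure M (S n) \<le> ennreal c * emeasure M (S n)" .
    define m where "m = measure M (S n)"
    have em: "emeasure M (S n) = ennreal m" unfolding m_def by (simp add: emeasure_eq_measure)
    have m0: "0 \<le> m" unfolding m_def by simp
    have e1: "ennreal ((c + e) * m) = ennreal (c + e) * ennreal m" by (rule ennreal_mult) (use c e m0 in auto)
    have e2: "ennreal (c * m) = ennreal c * ennreal m" by (rule ennreal_mult) (use c e m0 in auto)
    from le have "ennreal ((c + e) * m) \<le> ennreal (c * m)" unfolding em e1 e2 .
    then have "(c + e) * m \<le> c * m" using c m0 by (subst (asm) ennreal_le_iff) auto
    then have "e * m \<le> 0" by (simp add: algebra_simps)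
    then have "m = 0" using e m0 by (smt (verit) mult_pos_pos)
    then show ?thesis using SM em by (auto intro: null_setsI)
  qed
  show ?thesis
  proof (rule AE_I')
    show "(\<Union>n. S n) \<in> null_sets M" using null by (rule null_sets_UN)
    show "{\<omega> \<in> space M. \<not> nn_cond_exp M G f \<omega> \<le> ennreal c} \<subseteq> (\<Union>n. S n)"
    proof
      fix \<omega> assume "\<omega> \<in> {\<omega> \<in> space M. \<not> nn_cond_exp M G f \<omega> \<le> ennreal c}"
      then have w: "\<omega> \<in> space M" and gt: "ennreal c < g \<omega>" unfolding g_def by auto
      show "\<omega> \<in> (\<Union>n. S n)"
      proof (cases "g \<omega> = \<top>")
        case True then show ?thesis using w unfolding S_def by auto
      next
        case False
        then obtain r where r: "g \<omega> = ennreal r" "0 \<le> r" by (cases "g \<omega>") auto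
        then have "c < r" using gt c by (simp add: ennreal_less_iff)
        then obtain n where n: "1 / real (Suc n) < r - c" using nat_approx_posE by (metis diff_gt_0_iff_gt)
        then have "ennreal (c + 1 / Suc n) \<le> g \<omega>" using r by (simp add: ennreal_leI)
        then show ?thesis using w unfolding S_def by auto
      qed
    qed
  qed
qed



definition "imp_h (k::real) (c::real) = ln (2*c) / k"
definition "imp_rho (c::real) = (2*c-2)/(2*c-1)"
definition "imp_gam c = 2 / (1 + imp_rho c)"
definition "imp_k k c = k + ln (imp_gam c) / imp_h k c"
definition "imp_c k c = imp_gam c * c / (1 - imp_gam c * imp_rho c)"

lemma imp_facts:
  assumes k: "0 < k" and c: "1 \<le> c"
  shows "0 < imp_h k c" "exp (k * imp_h k c) = 2 * c" "0 \<le> imp_rho c" "imp_rho c < 1"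
    "1 < imp_gam c" "imp_gam c * imp_rho c < 1" "k < imp_k k c" "0 \<le> imp_c k c"
    "exp ((imp_k k c - k) * imp_h k c) = imp_gam c"
proof -
  have l2: "0 < ln (2*c)" using c by simp
  show h: "0 < imp_h k c" unfolding imp_h_def using l2 k by simp
  show "exp (k * imp_h k c) = 2 * c" unfolding imp_h_def using k c by simp
  show r0: "0 \<le> imp_rho c" unfolding imp_rho_def using c by simp
  show r1: "imp_rho c < 1" unfolding imp_rho_def using c by (simp add: divide_simps)
  show g1: "1 < imp_gam c" unfolding imp_gam_def using r0 r1 by (simp add: divide_simps)
  show gr: "imp_gam c * imp_rho c < 1" unfolding imp_gam_def using r0 r1 by (simp add: divide_simps)
  have "0 < ln (imp_gam c)" using g1 by simp
  then show "k < imp_k k c" unfolding imp_k_def using h by simp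
  show "0 \<le> imp_c k c" unfolding imp_c_def using gr g1 c by simp
  show "exp ((imp_k k c - k) * imp_h k c) = imp_gam c" unfolding imp_k_def using h g1 by simp
qed

lemma step_real:
  fixes d y ml me a c :: real
  assumes "0 \<le> d" "0 \<le> y" "0 \<le> ml" "0 \<le> me" "0 < a" "1 \<le> c"
    and h1: "d + y \<le> a * (c * (ml + me))" and h2: "a * ml \<le> d" and h3: "(a * (2 * c)) * me \<le> y"
  shows "y \<le> imp_rho c * (d + y)"
proof -
  have e: "a * (c * (ml + me)) = c * (a * ml) + (a * (2 * c) * me) / 2" by (simp add: algebra_simps)
  have "c * (a * ml) \<le> c * d" using h2 assms by (intro mult_left_mono) auto
  then have "y / 2 \<le> (c - 1) * d" using h1 h3 e by (simp add: algebra_simps)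
  then have "(2 * c - 1) * y \<le> (2 * c - 2) * (d + y)" by (simp add: algebra_simps)
  then show ?thesis unfolding imp_rho_def using assms by (simp add: field_simps)
qed


lemma self_improve:
  fixes M :: "'a measure" and U :: "'a \<Rightarrow> real" and k c :: real
  assumes fm: "finite_measure M" and Um[measurable]: "U \<in> borel_measurable M"
    and U0: "\<forall>\<omega>\<in>space M. 0 \<le> U \<omega>" and k: "0 < k" and c: "1 \<le> c" and B[measurable]: "B \<in> sets M"
    and H: "\<And>x. 0 \<le> x \<Longrightarrow> (\<integral>\<^sup>+\<omega>. indicator {\<omega>\<in>B. x \<le> U \<omega>} \<omega> * ennreal (exp (k * (U \<omega> - x))) \<partial>M)
              \<le> ennreal c * emeasure M {\<omega>\<in>B. x \<le> U \<omega>}"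
  shows "(\<integral>\<^sup>+\<omega>. indicator B \<omega> * ennreal (exp (imp_k k c * U \<omega>)) \<partial>M) \<le> ennreal (imp_c k c) * emeasure M B"
proof -
  interpret finite_measure M by fact
  note IF = imp_facts[OF k c]
  define h where "h = imp_h k c"
  define \<rho> where "\<rho> = imp_rho c"
  define \<gamma> where "\<gamma> = imp_gam c"
  have h: "0 < h" "exp (k * h) = 2 * c" using IF unfolding h_def by auto
  have \<rho>: "0 \<le> \<rho>" "\<rho> < 1" using IF unfolding \<rho>_def by auto
  have \<gamma>: "1 < \<gamma>" "\<gamma> * \<rho> < 1" "exp ((imp_k k c - k) * h) = \<gamma>" using IF unfolding \<rho>_def \<gamma>_def h_def by auto
  define E where "E x = {\<omega>\<in>B. x \<le> U \<omega>}" for x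
  define L where "L x = {\<omega>\<in>B. x \<le> U \<omega> \<and> U \<omega> < x + h}" for x
  define f where "f \<omega> = ennreal (exp (k * U \<omega>))" for \<omega>
  define HH where "HH x = (\<integral>\<^sup>+\<omega>. indicator (E x) \<omega> * f \<omega> \<partial>M)" for x
  have Bsp: "B \<subseteq> space M" using B by (rule sets.sets_into_space)
  have Em[measurable]: "E x \<in> sets M" for x
  proof -
    have "B \<inter> {\<omega>\<in>space M. x \<le> U \<omega>} \<in> sets M" by measurable
    moreover have "B \<inter> {\<omega>\<in>space M. x \<le> U \<omega>} = E x" unfolding E_def using Bsp by auto
    ultimately show ?thesis by simp
  qed
  have Lm[measurable]: "L x \<in> sets M" for x
  proof -
    have "B \<inter> {\<omega>\<in>space M. x \<le> U \<omega> \<and> U \<omega> < x + h} \<in> sets M" by measurable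
    moreover have "B \<inter> {\<omega>\<in>space M. x \<le> U \<omega> \<and> U \<omega> < x + h} = L x" unfolding L_def using Bsp by auto
    ultimately show ?thesis by simp
  qed
  have fm'[measurable]: "f \<in> borel_measurable M" unfolding f_def by measurable
  have E0: "E 0 = B" unfolding E_def using U0 Bsp by auto
  have H1: "HH x \<le> ennreal (exp (k * x)) * (ennreal c * emeasure M (E x))" if x: "0 \<le> x" for x
  proof -
    have "HH x = (\<integral>\<^sup>+\<omega>. ennreal (exp (k * x)) * (indicator (E x) \<omega> * ennreal (exp (k * (U \<omega> - x)))) \<partial>M)"
      unfolding HH_def f_def
    proof (rule nn_integral_cong)
      fix \<omega>
      have "exp (k * U \<omega>) = exp (k * x) * exp (k * (U \<omega> - x))" by (simp add: exp_add[symmetric] algebra_simps)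
      then show "indicator (E x) \<omega> * ennreal (exp (k * U \<omega>)) =
          ennreal (exp (k * x)) * (indicator (E x) \<omega> * ennreal (exp (k * (U \<omega> - x))))"
        by (simp add: ennreal_mult' mult.left_commute)
    qed
    also have "\<dots> = ennreal (exp (k * x)) * (\<integral>\<^sup>+\<omega>. indicator (E x) \<omega> * ennreal (exp (k * (U \<omega> - x))) \<partial>M)"
      by (rule nn_integral_cmult) measurable
    also have "\<dots> \<le> ennreal (exp (k * x)) * (ennreal c * emeasure M (E x))"
      by (rule mult_left_mono) (use H[OF x] in \<open>auto simp: E_def\<close>)
    finally show ?thesis .
  qed
  have HHmono: "HH y \<le> HH x" if "x \<le> y" for x y
    unfolding HH_def by (rule nn_integral_mono) (use that in \<open>auto simp: E_def split: split_indicator\<close>)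
  have H0: "HH 0 \<le> ennreal c * emeasure M B" using H1[of 0] E0 by simp
  have Hfin: "HH x < \<top>" if "0 \<le> x" for x
  proof -
    have "HH x \<le> ennreal c * emeasure M B" using HHmono[OF that] H0 by simp
    also have "\<dots> < \<top>" by (simp add: ennreal_mult_less_top emeasure_eq_measure)
    finally show ?thesis .
  qed
  have step: "HH (x + h) \<le> ennreal \<rho> * HH x" if x: "0 \<le> x" for x
  proof -
    define D where "D = (\<integral>\<^sup>+\<omega>. indicator (L x) \<omega> * f \<omega> \<partial>M)"
    have split: "HH x = D + HH (x + h)"
    proof -
      have "HH x = (\<integral>\<^sup>+\<omega>. indicator (L x) \<omega> * f \<omega> + indicator (E (x + h)) \<omega> * f \<omega> \<partial>M)"
        unfolding HH_def by (rule nn_integral_cong) (use h(1) in \<open>auto simp: E_def L_def split: split_indicator\<close>)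
      also have "\<dots> = D + HH (x + h)" unfolding D_def HH_def by (rule nn_integral_add) measurable
      finally show ?thesis .
    qed
    have msplit: "emeasure M (E x) = emeasure M (L x) + emeasure M (E (x + h))"
    proof -
      have "E x = L x \<union> E (x + h)" "L x \<inter> E (x + h) = {}" unfolding E_def L_def using h(1) by auto
      then show ?thesis by (simp add: plus_emeasure)
    qed
    have Dlow: "ennreal (exp (k * x)) * emeasure M (L x) \<le> D"
    proof -
      have "ennreal (exp (k * x)) * emeasure M (L x) = (\<integral>\<^sup>+\<omega>. ennreal (exp (k * x)) * indicator (L x) \<omega> \<partial>M)"
        by (simp add: nn_integral_cmult)
      also have "\<dots> \<le> D" unfolding D_def f_def
        by (rule nn_integral_mono) (use k in \<open>auto simp: L_def split: split_indicator\<close>)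
      finally show ?thesis .
    qed
    have Hlow: "ennreal (exp (k * (x + h))) * emeasure M (E (x + h)) \<le> HH (x + h)"
    proof -
      have "ennreal (exp (k * (x + h))) * emeasure M (E (x + h)) = (\<integral>\<^sup>+\<omega>. ennreal (exp (k * (x + h))) * indicator (E (x + h)) \<omega> \<partial>M)"
        by (simp add: nn_integral_cmult)
      also have "\<dots> \<le> HH (x + h)" unfolding HH_def f_def
        by (rule nn_integral_mono) (use k in \<open>auto simp: E_def split: split_indicator\<close>)
      finally show ?thesis .
    qed
    have Dfin: "D < \<top>" using split Hfin[OF x] by (metis le_iff_add top.not_eq_extremum top_unique)
    have Hfin2: "HH (x + h) < \<top>" using Hfin x h by simp
    obtain d where d: "D = ennreal d" "0 \<le> d" using Dfin by (cases D) auto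
    obtain y where y: "HH (x + h) = ennreal y" "0 \<le> y" using Hfin2 by (cases "HH (x + h)") auto
    define ml where "ml = measure M (L x)"
    define me where "me = measure M (E (x + h))"
    have ml: "emeasure M (L x) = ennreal ml" "0 \<le> ml" unfolding ml_def by (simp_all add: emeasure_eq_measure)
    have me: "emeasure M (E (x + h)) = ennreal me" "0 \<le> me" unfolding me_def by (simp_all add: emeasure_eq_measure)
    define a where "a = exp (k * x)"
    have a: "0 < a" unfolding a_def by simp
    have ea: "exp (k * (x + h)) = a * (2 * c)" unfolding a_def using h by (simp add: distrib_left exp_add)
    have i1: "d + y \<le> a * (c * (ml + me))"
    proof -
      have "ennreal (d + y) \<le> ennreal (a * (c * (ml + me)))"
        using H1[OF x] split msplit d y ml me a c
        by (simp add: a_def ennreal_mult'[symmetric] ennreal_plus[symmetric] del: ennreal_plus)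
      then show ?thesis using a c ml me by (subst (asm) ennreal_le_iff) auto
    qed
    have i2: "a * ml \<le> d"
    proof -
      have "ennreal (a * ml) \<le> ennreal d" using Dlow d ml a by (simp add: a_def ennreal_mult')
      then show ?thesis using d by (simp add: ennreal_le_iff)
    qed
    have i3: "(a * (2 * c)) * me \<le> y"
    proof -
      have "ennreal ((a * (2 * c)) * me) \<le> ennreal y" using Hlow y me a c ea by (simp add: ennreal_mult')
      then show ?thesis using y by (simp add: ennreal_le_iff)
    qed
    have "y \<le> \<rho> * (d + y)" unfolding \<rho>_def
      by (rule step_real[OF d(2) y(2) ml(2) me(2) a c i1 i2 i3])
    then have "ennreal y \<le> ennreal (\<rho> * (d + y))" by (rule ennreal_leI)
    also have "\<dots> = ennreal \<rho> * HH x" using split d y \<rho> by (simp add: ennreal_mult')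
    finally show ?thesis using y by simp
  qed
  have geo: "HH (real n * h) \<le> ennreal (\<rho> ^ n) * (ennreal c * emeasure M B)" for n
  proof (induction n)
    case 0 then show ?case using H0 by simp
  next
    case (Suc n)
    have "HH (real (Suc n) * h) = HH (real n * h + h)" by (simp add: algebra_simps)
    also have "\<dots> \<le> ennreal \<rho> * HH (real n * h)" by (rule step) (use h in simp)
    also have "\<dots> \<le> ennreal \<rho> * (ennreal (\<rho> ^ n) * (ennreal c * emeasure M B))"
      by (rule mult_left_mono[OF Suc.IH]) simp
    also have "\<dots> = ennreal (\<rho> ^ Suc n) * (ennreal c * emeasure M B)"
      using \<rho> by (simp add: ennreal_mult' mult.assoc)
    finally show ?case .
  qed
  define k' where "k' = imp_k k c"
  define LL where "LL n = L (real n * h)" for n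
  have LLm[measurable]: "LL n \<in> sets M" for n unfolding LL_def by simp
  have disj: "disjoint_family LL" unfolding disjoint_family_on_def
  proof (intro ballI impI)
    fix m n :: nat assume "m \<in> UNIV" "n \<in> UNIV" "m \<noteq> n"
    show "LL m \<inter> LL n = {}"
    proof (rule ccontr)
      assume "LL m \<inter> LL n \<noteq> {}"
      then obtain \<omega> where "\<omega> \<in> LL m" "\<omega> \<in> LL n" by auto
      then have "real m * h \<le> U \<omega>" "U \<omega> < real m * h + h" "real n * h \<le> U \<omega>" "U \<omega> < real n * h + h"
        unfolding LL_def L_def by auto
      then have "real m * h < (real n + 1) * h" "real n * h < (real m + 1) * h" by (auto simp: algebra_simps)
      then have "real m < real n + 1" "real n < real m + 1" using h(1) by (auto simp: mult_less_cancel_right)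
      then show False using \<open>m \<noteq> n\<close> by linarith
    qed
  qed
  have UN: "(\<Union>n. LL n) = B"
  proof
    show "(\<Union>n. LL n) \<subseteq> B" unfolding LL_def L_def by auto
    show "B \<subseteq> (\<Union>n. LL n)"
    proof
      fix \<omega> assume w: "\<omega> \<in> B"
      then have u: "0 \<le> U \<omega>" using U0 Bsp by auto
      define n where "n = nat \<lfloor>U \<omega> / h\<rfloor>"
      have "real n = of_int \<lfloor>U \<omega> / h\<rfloor>" unfolding n_def using u h by simp
      then have "real n \<le> U \<omega> / h" "U \<omega> / h < real n + 1" by linarith+
      then have "real n * h \<le> U \<omega>" "U \<omega> < real n * h + h" using h(1) by (auto simp: field_simps)
      then show "\<omega> \<in> (\<Union>n. LL n)" using w unfolding LL_def L_def by auto
    qed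
  qed
  have "(\<integral>\<^sup>+\<omega>. indicator B \<omega> * ennreal (exp (k' * U \<omega>)) \<partial>M)
      = (\<integral>\<^sup>+\<omega>. (\<Sum>n. indicator (LL n) \<omega> * ennreal (exp (k' * U \<omega>))) \<partial>M)"
    by (rule nn_integral_cong) (simp add: ennreal_suminf_multc suminf_indicator[OF disj] UN)
  also have "\<dots> = (\<Sum>n. (\<integral>\<^sup>+\<omega>. indicator (LL n) \<omega> * ennreal (exp (k' * U \<omega>)) \<partial>M))"
    by (rule nn_integral_suminf) measurable
  also have "\<dots> \<le> (\<Sum>n. ennreal (\<gamma> ^ Suc n * \<rho> ^ n) * (ennreal c * emeasure M B))"
  proof (rule suminf_le)
    fix n
    have "(\<integral>\<^sup>+\<omega>. indicator (LL n) \<omega> * ennreal (exp (k' * U \<omega>)) \<partial>M)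
        \<le> (\<integral>\<^sup>+\<omega>. ennreal (\<gamma> ^ Suc n) * (indicator (E (real n * h)) \<omega> * f \<omega>) \<partial>M)"
    proof (rule nn_integral_mono)
      fix \<omega>
      show "indicator (LL n) \<omega> * ennreal (exp (k' * U \<omega>)) \<le> ennreal (\<gamma> ^ Suc n) * (indicator (E (real n * h)) \<omega> * f \<omega>)"
      proof (cases "\<omega> \<in> LL n")
        case True
        then have u: "U \<omega> < real (Suc n) * h" "\<omega> \<in> E (real n * h)" unfolding LL_def L_def E_def
          by (auto simp: algebra_simps)
        have "k' - k > 0" using IF unfolding k'_def by simp
        then have "(k' - k) * U \<omega> \<le> (k' - k) * (real (Suc n) * h)" using u by simp
        then have "exp ((k' - k) * U \<omega>) \<le> exp ((k' - k) * (real (Suc n) * h))" by simp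
        also have "\<dots> = exp ((k' - k) * h) ^ Suc n"
          by (subst exp_of_nat_mult[symmetric]) (simp add: algebra_simps)
        also have "\<dots> = \<gamma> ^ Suc n" using \<gamma> unfolding k'_def by simp
        finally have le: "exp ((k' - k) * U \<omega>) \<le> \<gamma> ^ Suc n" .
        have "exp (k' * U \<omega>) = exp ((k' - k) * U \<omega>) * exp (k * U \<omega>)"
          by (simp add: exp_add[symmetric] algebra_simps)
        also have "\<dots> \<le> \<gamma> ^ Suc n * exp (k * U \<omega>)" by (rule mult_right_mono[OF le]) simp
        finally have "ennreal (exp (k' * U \<omega>)) \<le> ennreal (\<gamma> ^ Suc n * exp (k * U \<omega>))"
          by (rule ennreal_leI)
        then show ?thesis using True u \<gamma> by (simp add: f_def ennreal_mult')
      qed simp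
    qed
    also have "\<dots> = ennreal (\<gamma> ^ Suc n) * HH (real n * h)" unfolding HH_def
      by (rule nn_integral_cmult) measurable
    also have "\<dots> \<le> ennreal (\<gamma> ^ Suc n) * (ennreal (\<rho> ^ n) * (ennreal c * emeasure M B))"
      by (rule mult_left_mono[OF geo]) simp
    also have "\<dots> = ennreal (\<gamma> ^ Suc n * \<rho> ^ n) * (ennreal c * emeasure M B)"
      using \<gamma> \<rho> by (simp add: ennreal_mult' mult.assoc)
    finally show "(\<integral>\<^sup>+\<omega>. indicator (LL n) \<omega> * ennreal (exp (k' * U \<omega>)) \<partial>M)
        \<le> ennreal (\<gamma> ^ Suc n * \<rho> ^ n) * (ennreal c * emeasure M B)" .
  qed auto
  also have "\<dots> = ennreal (\<Sum>n. \<gamma> ^ Suc n * \<rho> ^ n) * (ennreal c * emeasure M B)"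
  proof -
    have sm: "summable (\<lambda>n. \<gamma> ^ Suc n * \<rho> ^ n)"
    proof -
      have "summable (\<lambda>n. \<gamma> * (\<gamma> * \<rho>) ^ n)" using \<gamma> \<rho> by (intro summable_mult summable_geometric) auto
      then show ?thesis by (simp add: power_mult_distrib mult.assoc)
    qed
    show ?thesis unfolding ennreal_suminf_multc
      by (subst suminf_ennreal2[OF _ sm]) (use \<gamma> \<rho> in auto)
  qed
  also have "(\<Sum>n. \<gamma> ^ Suc n * \<rho> ^ n) = \<gamma> / (1 - \<gamma> * \<rho>)"
  proof -
    have "(\<lambda>n. \<gamma> ^ Suc n * \<rho> ^ n) = (\<lambda>n. \<gamma> * (\<gamma> * \<rho>) ^ n)" by (simp add: power_mult_distrib mult.assoc)
    moreover have "(\<Sum>n. \<gamma> * (\<gamma> * \<rho>) ^ n) = \<gamma> * (1 / (1 - \<gamma> * \<rho>))"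
      using \<gamma> \<rho> by (subst suminf_mult[OF summable_geometric]) (auto simp: suminf_geometric)
    ultimately show ?thesis by simp
  qed
  also have "ennreal (\<gamma> / (1 - \<gamma> * \<rho>)) * (ennreal c * emeasure M B) = ennreal (imp_c k c) * emeasure M B"
    unfolding imp_c_def \<gamma>_def[symmetric] \<rho>_def[symmetric] using \<gamma> \<rho> c
    by (simp add: ennreal_mult'[symmetric] mult.assoc[symmetric] ennreal_mult'' )
  finally show ?thesis unfolding k'_def .
qed


theorem lemma6p2:
  fixes M :: "'a measure" and F :: "real \<Rightarrow> 'a measure" and T k :: real
    and Mbar A :: "real \<Rightarrow> 'a \<Rightarrow> real"
  assumes "usual_filtration M F T"
    and "continuous_martingale_on M F T Mbar"
    and "\<forall>\<omega> \<in> space M. Mbar 0 \<omega> = 0"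
    and "is_quadratic_variation M F T Mbar A"
    and "k > 0"
    and "exp_qv_bounded M F T A k"
  shows "(\<exists>k'. k' > k \<and> exp_qv_bounded M F T A k') \<and> critical_exponent M F T A > ereal k"
proof -
  note uf = assms(1)[unfolded usual_filtration_def]
  have P: "prob_space M" and FI: "filtration (space M) F" and subM: "\<forall>t. sets (F t) \<subseteq> sets M"
    using uf by auto
  note qv = assms(4)[unfolded is_quadratic_variation_def]
  have Ameas: "\<forall>t\<in>{0..T}. A t \<in> borel_measurable (F t)"
    and Acont: "\<forall>\<omega>\<in>space M. continuous_on {0..T} (\<lambda>t. A t \<omega>)"
    and Amono: "\<forall>\<omega>\<in>space M. mono_on {0..T} (\<lambda>t. A t \<omega>)"
    using qv by auto
  have k: "0 < k" by fact
  obtain C where C: "\<And>\<tau>. stopping_time_on M F T \<tau> \<Longrightarrow>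
      AE \<omega> in M. nn_cond_exp M (filtration.pre_sigma (space M) F \<tau>)
              (\<lambda>\<omega>. ennreal (exp (k * (A T \<omega> - A (\<tau> \<omega>) \<omega>)))) \<omega> \<le> ennreal C"
    using assms(6) unfolding exp_qv_bounded_def by blast
  have fm: "finite_measure M" using P by (simp add: prob_space_def)
  have ex: "\<exists>k'. k' > k \<and> exp_qv_bounded M F T A k'"
  proof (cases "0 \<le> T")
    case False
    have "\<not> stopping_time_on M F T \<tau>" for \<tau>
    proof
      assume "stopping_time_on M F T \<tau>"
      moreover obtain \<omega> where "\<omega> \<in> space M" using prob_space.not_empty[OF P] by blast
      ultimately show False using False unfolding stopping_time_on_def by auto
    qed
    then have "exp_qv_bounded M F T A (k + 1)" unfolding exp_qv_bounded_def by auto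
    then show ?thesis by (intro exI[of _ "k + 1"]) auto
  next
    case T0: True
    note ctx = FI subM Ameas Acont Amono T0
    define c where "c = max C 1"
    have c: "1 \<le> c" unfolding c_def by simp
    have Cc: "ennreal C \<le> ennreal c" unfolding c_def by (simp add: ennreal_leI)
    define k' where "k' = imp_k k c"
    have "exp_qv_bounded M F T A k'"
      unfolding exp_qv_bounded_def
    proof (intro exI allI impI)
      fix \<tau> assume st: "stopping_time_on M F T \<tau>"
      define G where "G = filtration.pre_sigma (space M) F \<tau>"
      define U where "U \<omega> = A T \<omega> - A (\<tau> \<omega>) \<omega>" for \<omega>
      have Um[measurable]: "U \<in> borel_measurable M" unfolding U_def by (rule U_measM[OF ctx st])
      have sa: "subalgebra M G" unfolding G_def by (rule pre_sigma_subalg[OF ctx st])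
      have rng: "\<tau> \<omega> \<in> {0..T}" if "\<omega> \<in> space M" for \<omega> using st that unfolding stopping_time_on_def by auto
      have U0: "\<forall>\<omega>\<in>space M. 0 \<le> U \<omega>"
      proof
        fix \<omega> assume w: "\<omega> \<in> space M"
        then have "A (\<tau> \<omega>) \<omega> \<le> A T \<omega>" using Amono rng[OF w] T0 by (auto simp: mono_on_def)
        then show "0 \<le> U \<omega>" unfolding U_def by simp
      qed
      show "AE \<omega> in M. nn_cond_exp M (filtration.pre_sigma (space M) F \<tau>)
              (\<lambda>\<omega>. ennreal (exp (k' * (A T \<omega> - A (\<tau> \<omega>) \<omega>)))) \<omega> \<le> ennreal (imp_c k c)"
        unfolding G_def[symmetric] U_def[symmetric]
      proof (rule CE2[OF fm sa])
        show "(\<lambda>\<omega>. ennreal (exp (k' * U \<omega>))) \<in> borel_measurable M" by measurable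
        show "0 \<le> imp_c k c" using imp_facts[OF k c] by simp
        fix B assume BG: "B \<in> sets G"
        have BM: "B \<in> sets M" using sa BG unfolding subalgebra_def by auto
        show "(\<integral>\<^sup>+\<omega>. indicator B \<omega> * ennreal (exp (k' * U \<omega>)) \<partial>M) \<le> ennreal (imp_c k c) * emeasure M B"
          unfolding k'_def
        proof (rule self_improve[OF fm Um U0 k c BM])
          fix x :: real assume x: "0 \<le> x"
          define \<sigma> where "\<sigma> = hit T A \<tau> x"
          have st2: "stopping_time_on M F T \<sigma>" unfolding \<sigma>_def by (rule hit_stopping[OF ctx st x])
          define E where "E = {\<omega>\<in>B. x \<le> U \<omega>}"
          have EG: "E \<in> sets (filtration.pre_sigma (space M) F \<sigma>)" unfolding E_def \<sigma>_def U_def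
            by (rule hit_pre_sigma[OF ctx st x BG[unfolded G_def]])
          have Esp: "E \<subseteq> space M" unfolding E_def using BM sets.sets_into_space by auto
          have "(\<integral>\<^sup>+\<omega>. indicator E \<omega> * ennreal (exp (k * (A T \<omega> - A (\<sigma> \<omega>) \<omega>))) \<partial>M) \<le> ennreal C * emeasure M E"
          proof (rule CE1[OF fm pre_sigma_subalg[OF ctx st2]])
            show "(\<lambda>\<omega>. ennreal (exp (k * (A T \<omega> - A (\<sigma> \<omega>) \<omega>)))) \<in> borel_measurable M"
              using U_measM[OF ctx st2] by measurable
          qed (use C[OF st2] EG in auto)
          also have "\<dots> \<le> ennreal c * emeasure M E" by (rule mult_right_mono[OF Cc]) simp
          also have "(\<integral>\<^sup>+\<omega>. indicator E \<omega> * ennreal (exp (k * (A T \<omega> - A (\<sigma> \<omega>) \<omega>))) \<partial>M)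
              = (\<integral>\<^sup>+\<omega>. indicator E \<omega> * ennreal (exp (k * (U \<omega> - x))) \<partial>M)"
          proof (rule nn_integral_cong)
            fix \<omega> assume w: "\<omega> \<in> space M"
            show "indicator E \<omega> * ennreal (exp (k * (A T \<omega> - A (\<sigma> \<omega>) \<omega>))) = indicator E \<omega> * ennreal (exp (k * (U \<omega> - x)))"
            proof (cases "\<omega> \<in> E")
              case True
              then have "x \<le> A T \<omega> - A (\<tau> \<omega>) \<omega>" unfolding E_def U_def by auto
              from hit_U[OF ctx st x w this] have e: "A T \<omega> - A (\<sigma> \<omega>) \<omega> = U \<omega> - x"
                unfolding \<sigma>_def U_def .
              show ?thesis unfolding e ..
            qed simp
          qed
          finally show "(\<integral>\<^sup>+\<omega>. indicator {\<omega> \<in> B. x \<le> U \<omega>} \<omega> * ennreal (exp (k * (U \<omega> - x))) \<partial>M)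
              \<le> ennreal c * emeasure M {\<omega> \<in> B. x \<le> U \<omega>}" unfolding E_def .
        qed
      qed
    qed
    moreover have "k < k'" unfolding k'_def using imp_facts[OF k c] by simp
    ultimately show ?thesis by blast
  qed
  moreover have "critical_exponent M F T A > ereal k"
  proof -
    obtain k' where k': "k' > k" "exp_qv_bounded M F T A k'" using ex by blast
    have "ereal k' \<in> ereal ` {b. b \<ge> 0 \<and> exp_qv_bounded M F T A b}" using k' k by auto
    then have "ereal k' \<le> critical_exponent M F T A" unfolding critical_exponent_def by (rule Sup_upper)
    moreover have "ereal k < ereal k'" using k' by simp
    ultimately show ?thesis by (rule order.strict_trans2[rotated])
  qed
  ultimately show ?thesis by blast
qed

end
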